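(* Let $g,h:\mathbb R\to\mathbb R$ be Borel functions and let $\mathcal R_{g,h}$ be the set of all products $\varrho_1\times\varrho_2$ of Borel probability measures on $\mathbb R$ with respect to which $g$ and $h$ are weakly comonotonic. Let $\mathcal R_{\rm c}=\{\delta_x\times\delta_{x'}:x,x'\in\mathbb R\}$ and $\mathcal R_{\rm a}=\{\delta_x\times\delta_x:x\in\mathbb R\}$. Then: (i) $\mathcal R_{g,h}\supseteq\mathcal R_{\rm c}$ if and only if $g$ and $h$ are strongly comonotonic; (ii) $\mathcal R_{g,h}=\mathcal R_{\rm a}$ if and only if $g$ and $h$ are strongly antimonotonic and injective on $\mathbb R$.
   Context: $\delta_x$ denotes the point mass at $x$. Functions $g,h$ are weakly comonotonic with respect to a product measure $\varrho_1\times\varrho_2$ on $(\mathbb R^2,\mathcal B(\mathbb R)\otimes\mathcal B(\mathbb R))$ if the integral $\iint_{\mathbb R^2}(g(x)-g(x'))(h(x)-h(x'))\,\varrho_1(\mathrm dx)\varrho_2(\mathrm dx')$ exists and is $\ge0$. $g$ and $h$ are strongly comonotonic if $(g(x)-g(x'))(h(x)-h(x'))\ge0$ for all $x,x'\in\mathbb R$, and strongly antimonotonic if $(g(x)-g(x'))(h(x)-h(x'))\le0$ for all $x,x'\in\mathbb R$. *)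

theory Defs
  imports "HOL-Probability.Probability"
begin

definition comon_integrand :: "(real \<Rightarrow> real) \<Rightarrow> (real \<Rightarrow> real) \<Rightarrow> real \<times> real \<Rightarrow> real" where
  "comon_integrand g h = (\<lambda>(x, x'). (g x - g x') * (h x - h x'))"

text \<open>The integral of the integrand exists (in the extended sense: positive or negative
  part has finite integral) and is nonnegative.\<close>
definition weakly_comonotonic :: "(real \<Rightarrow> real) \<Rightarrow> (real \<Rightarrow> real) \<Rightarrow> (real \<times> real) measure \<Rightarrow> bool" where
  "weakly_comonotonic g h M \<longleftrightarrow>
     ((\<integral>\<^sup>+ z. ennreal (comon_integrand g h z) \<partial>M) < \<infinity> \<or>
      (\<integral>\<^sup>+ z. ennreal (- comon_integrand g h z) \<partial>M) < \<infinity>) \<and>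
     (\<integral>\<^sup>+ z. ennreal (- comon_integrand g h z) \<partial>M) \<le> (\<integral>\<^sup>+ z. ennreal (comon_integrand g h z) \<partial>M)"

definition strongly_comonotonic :: "(real \<Rightarrow> real) \<Rightarrow> (real \<Rightarrow> real) \<Rightarrow> bool" where
  "strongly_comonotonic g h \<longleftrightarrow> (\<forall>x x'. (g x - g x') * (h x - h x') \<ge> 0)"

definition strongly_antimonotonic :: "(real \<Rightarrow> real) \<Rightarrow> (real \<Rightarrow> real) \<Rightarrow> bool" where
  "strongly_antimonotonic g h \<longleftrightarrow> (\<forall>x x'. (g x - g x') * (h x - h x') \<le> 0)"

definition borel_prob :: "real measure \<Rightarrow> bool" where
  "borel_prob M \<longleftrightarrow> prob_space M \<and> sets M = sets borel"

definition R_gh :: "(real \<Rightarrow> real) \<Rightarrow> (real \<Rightarrow> real) \<Rightarrow> (real \<times> real) measure set" where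
  "R_gh g h = {\<rho>1 \<Otimes>\<^sub>M \<rho>2 | \<rho>1 \<rho>2. borel_prob \<rho>1 \<and> borel_prob \<rho>2 \<and>
                 weakly_comonotonic g h (\<rho>1 \<Otimes>\<^sub>M \<rho>2)}"

definition R_c :: "(real \<times> real) measure set" where
  "R_c = {return borel x \<Otimes>\<^sub>M return borel x' | x x'. True}"

definition R_a :: "(real \<times> real) measure set" where
  "R_a = {return borel x \<Otimes>\<^sub>M return borel x | x. True}"

end

theory Submission
  imports Defs
begin

lemma ci_eq: "comon_integrand g h = (\<lambda>z. (g (fst z) - g (snd z)) * (h (fst z) - h (snd z)))"
  by (auto simp: comon_integrand_def)

lemma ci_meas:
  assumes [measurable]: "g \<in> borel_measurable borel" "h \<in> borel_measurable borel"
  shows "comon_integrand g h \<in> borel_measurable (borel \<Otimes>\<^sub>M borel)"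
  unfolding ci_eq by measurable

lemma sets_ret_pair: "sets (return borel x \<Otimes>\<^sub>M return borel y) = sets (borel \<Otimes>\<^sub>M (borel :: real measure))"
  by (intro sets_pair_measure_cong) auto

lemma nn_int_pt:
  fixes f :: "real \<times> real \<Rightarrow> ennreal"
  assumes f: "f \<in> borel_measurable (borel \<Otimes>\<^sub>M borel)"
  shows "(\<integral>\<^sup>+z. f z \<partial>(return borel x \<Otimes>\<^sub>M return borel y)) = f (x, y)"
proof -
  interpret p: prob_space "return borel y" by (rule prob_space_return) auto
  have f': "f \<in> borel_measurable (return borel x \<Otimes>\<^sub>M return borel y)"
    using f by (subst measurable_cong_sets[OF sets_ret_pair refl])
  have "(\<integral>\<^sup>+z. f z \<partial>(return borel x \<Otimes>\<^sub>M return borel y))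
      = (\<integral>\<^sup>+ a. \<integral>\<^sup>+ b. f (a, b) \<partial>return borel y \<partial>return borel x)"
    using p.nn_integral_fst[OF f'] by simp
  also have "\<dots> = (\<integral>\<^sup>+ a. f (a, y) \<partial>return borel x)"
    by (intro nn_integral_cong nn_integral_return) (use f in auto)
  also have "\<dots> = f (x, y)"
    by (intro nn_integral_return) (use f in auto)
  finally show ?thesis .
qed

lemma wc_pt:
  assumes "g \<in> borel_measurable borel" "h \<in> borel_measurable borel"
  shows "weakly_comonotonic g h (return borel x \<Otimes>\<^sub>M return borel y) \<longleftrightarrow>
     (g x - g y) * (h x - h y) \<ge> 0"
proof -
  note m = ci_meas[OF assms]
  have "(\<lambda>z. ennreal (comon_integrand g h z)) \<in> borel_measurable (borel \<Otimes>\<^sub>M borel)"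
       "(\<lambda>z. ennreal (- comon_integrand g h z)) \<in> borel_measurable (borel \<Otimes>\<^sub>M borel)"
    using m by measurable
  then show ?thesis unfolding weakly_comonotonic_def
    by (auto simp add: nn_int_pt comon_integrand_def ennreal_le_iff2)
qed

lemma bp_ret: "borel_prob (return borel (x::real))"
  unfolding borel_prob_def by (auto intro: prob_space_return)

lemma ret_pair_neq:
  assumes "return borel x \<Otimes>\<^sub>M return borel x' = return borel y \<Otimes>\<^sub>M return borel (y::real)"
  shows "x = x'"
proof -
  interpret p: prob_space "return borel x'" by (rule prob_space_return) auto
  interpret q: prob_space "return borel y" by (rule prob_space_return) auto
  have "emeasure (return borel x \<Otimes>\<^sub>M return borel x') ({x} \<times> {x'}) = 1"
    by (subst p.emeasure_pair_measure_Times) auto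
  moreover have "emeasure (return borel y \<Otimes>\<^sub>M return borel y) ({x} \<times> {x'})
     = indicator {x} y * indicator {x'} y"
    by (subst q.emeasure_pair_measure_Times) auto
  ultimately show ?thesis using assms by (cases "y=x"; cases "y=x'") auto
qed

lemma conc:
  assumes "borel_prob \<rho>" "AE y in \<rho>. y = (x0::real)"
  shows "\<rho> = return borel x0"
proof -
  interpret prob_space \<rho> using assms(1) by (simp add: borel_prob_def)
  have s: "sets \<rho> = sets borel" using assms(1) by (simp add: borel_prob_def)
  show ?thesis
  proof (rule measure_eqI)
    show "sets \<rho> = sets (return borel x0)" using s by simp
    fix A assume A: "A \<in> sets \<rho>"
    have "emeasure \<rho> A = (\<integral>\<^sup>+ y. indicator A y \<partial>\<rho>)" using A by simp
    also have "\<dots> = (\<integral>\<^sup>+ y. indicator A x0 \<partial>\<rho>)"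
      by (rule nn_integral_cong_AE) (use assms(2) in auto)
    also have "\<dots> = indicator A x0" by (simp add: emeasure_space_1)
    also have "\<dots> = emeasure (return borel x0) A" using A s by simp
    finally show "emeasure \<rho> A = emeasure (return borel x0) A" .
  qed
qed

lemma collapse:
  assumes "borel_prob \<rho>1" "borel_prob \<rho>2" "AE z in \<rho>1 \<Otimes>\<^sub>M \<rho>2. fst z = snd z"
  shows "\<exists>x. \<rho>1 = return borel x \<and> \<rho>2 = return borel x"
proof -
  interpret p1: prob_space \<rho>1 using assms(1) by (simp add: borel_prob_def)
  interpret p2: prob_space \<rho>2 using assms(2) by (simp add: borel_prob_def)
  interpret pair_sigma_finite \<rho>1 \<rho>2 by unfold_locales
  have hh: "AE x in \<rho>1. AE y in \<rho>2. x = y" using AE_pair[OF assms(3)] by simp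
  then obtain x where "AE y in \<rho>2. x = y"
  proof -
    assume *: "\<And>x. AE y in \<rho>2. x = y \<Longrightarrow> thesis"
    from \<open>AE x in \<rho>1. AE y in \<rho>2. x = y\<close> have "AE x in \<rho>1. thesis"
      by (rule eventually_mono) (rule *)
    then show thesis by simp
  qed
  then have e2: "\<rho>2 = return borel x" by (intro conc assms(2)) auto
  have "AE x' in \<rho>1. AE y in return borel x. x' = y"
    using hh unfolding e2 .
  then have "AE x' in \<rho>1. x' = x"
    by (rule eventually_mono) (subst (asm) AE_return, auto)
  then have "\<rho>1 = return borel x" by (intro conc assms(1))
  with e2 show ?thesis by blast
qed

lemma in_Rgh_pt:
  assumes "g \<in> borel_measurable borel" "h \<in> borel_measurable borel"
  shows "return borel x \<Otimes>\<^sub>M return borel y \<in> R_gh g h \<longleftrightarrow> (g x - g y) * (h x - h y) \<ge> 0"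
proof
  assume "return borel x \<Otimes>\<^sub>M return borel y \<in> R_gh g h"
  then obtain r1 r2 where "return borel x \<Otimes>\<^sub>M return borel y = r1 \<Otimes>\<^sub>M r2"
     "weakly_comonotonic g h (r1 \<Otimes>\<^sub>M r2)" unfolding R_gh_def by blast
  then show "(g x - g y) * (h x - h y) \<ge> 0" using wc_pt[OF assms] by metis
next
  assume "(g x - g y) * (h x - h y) \<ge> 0"
  then show "return borel x \<Otimes>\<^sub>M return borel y \<in> R_gh g h"
    unfolding R_gh_def using wc_pt[OF assms, of x y] bp_ret by blast
qed

lemma part2_back:
  assumes gm: "g \<in> borel_measurable borel" and hm: "h \<in> borel_measurable borel"
    and sa: "strongly_antimonotonic g h" and ig: "inj g" and ih: "inj h"
  shows "R_gh g h \<subseteq> R_a"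
proof
  fix M assume "M \<in> R_gh g h"
  then obtain r1 r2 where M: "M = r1 \<Otimes>\<^sub>M r2" and b1: "borel_prob r1" and b2: "borel_prob r2"
    and wc: "weakly_comonotonic g h (r1 \<Otimes>\<^sub>M r2)" unfolding R_gh_def by blast
  have ss: "sets (r1 \<Otimes>\<^sub>M r2) = sets (borel \<Otimes>\<^sub>M borel)"
    using b1 b2 by (intro sets_pair_measure_cong) (auto simp: borel_prob_def)
  note m = ci_meas[OF gm hm]
  have mm: "(\<lambda>z. ennreal (- comon_integrand g h z)) \<in> borel_measurable (borel \<Otimes>\<^sub>M borel)"
    using m by measurable
  have mm': "(\<lambda>z. ennreal (- comon_integrand g h z)) \<in> borel_measurable (r1 \<Otimes>\<^sub>M r2)"
    using mm by (subst measurable_cong_sets[OF ss refl])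
  have le: "comon_integrand g h z \<le> 0" for z
    using sa by (auto simp: strongly_antimonotonic_def comon_integrand_def split: prod.splits)
  have "(\<integral>\<^sup>+ z. ennreal (comon_integrand g h z) \<partial>(r1 \<Otimes>\<^sub>M r2)) = (\<integral>\<^sup>+ z. 0 \<partial>(r1 \<Otimes>\<^sub>M r2))"
    by (rule nn_integral_cong) (use le in \<open>simp add: ennreal_eq_0_iff\<close>)
  then have "(\<integral>\<^sup>+ z. ennreal (- comon_integrand g h z) \<partial>(r1 \<Otimes>\<^sub>M r2)) = 0"
    using wc unfolding weakly_comonotonic_def by simp
  then have "AE z in r1 \<Otimes>\<^sub>M r2. ennreal (- comon_integrand g h z) = 0"
    using nn_integral_0_iff_AE[OF mm'] by simp
  then have "AE z in r1 \<Otimes>\<^sub>M r2. fst z = snd z"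
  proof (rule eventually_mono)
    fix z :: "real \<times> real" assume "ennreal (- comon_integrand g h z) = 0"
    then have "comon_integrand g h z = 0" using le[of z] by (simp add: ennreal_eq_0_iff)
    then have "g (fst z) = g (snd z) \<or> h (fst z) = h (snd z)"
      by (auto simp: comon_integrand_def split: prod.splits)
    then show "fst z = snd z" using ig ih by (auto dest: injD)
  qed
  then obtain x where "r1 = return borel x" "r2 = return borel x"
    using collapse[OF b1 b2] by blast
  then show "M \<in> R_a" unfolding R_a_def M by blast
qed

theorem theorem4p1:
  fixes g h :: "real \<Rightarrow> real"
  assumes "g \<in> borel_measurable borel" and "h \<in> borel_measurable borel"
  shows "(R_c \<subseteq> R_gh g h \<longleftrightarrow> strongly_comonotonic g h) \<and>
         (R_gh g h = R_a \<longleftrightarrow> strongly_antimonotonic g h \<and> inj g \<and> inj h)"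
proof -
  have A: "R_c \<subseteq> R_gh g h \<longleftrightarrow> strongly_comonotonic g h"
  proof
    assume "R_c \<subseteq> R_gh g h"
    then have "return borel x \<Otimes>\<^sub>M return borel x' \<in> R_gh g h" for x x'
      unfolding R_c_def by blast
    then show "strongly_comonotonic g h"
      unfolding strongly_comonotonic_def using in_Rgh_pt[OF assms] by simp
  next
    assume sc: "strongly_comonotonic g h"
    show "R_c \<subseteq> R_gh g h"
    proof
      fix M assume "M \<in> R_c"
      then obtain x x' where "M = return borel x \<Otimes>\<^sub>M return borel x'" unfolding R_c_def by blast
      then show "M \<in> R_gh g h" using in_Rgh_pt[OF assms, of x x'] sc
        unfolding strongly_comonotonic_def by simp
    qed
  qed
  have B: "R_gh g h = R_a \<longleftrightarrow> strongly_antimonotonic g h \<and> inj g \<and> inj h"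
  proof
    assume eq: "R_gh g h = R_a"
    have key: "x = x'" if "(g x - g x') * (h x - h x') \<ge> 0" for x x'
    proof -
      have "return borel x \<Otimes>\<^sub>M return borel x' \<in> R_gh g h"
        using in_Rgh_pt[OF assms, of x x'] that by simp
      then have "return borel x \<Otimes>\<^sub>M return borel x' \<in> R_a" using eq by simp
      then obtain y where "return borel x \<Otimes>\<^sub>M return borel x' = return borel y \<Otimes>\<^sub>M return borel y"
        unfolding R_a_def by blast
      then show ?thesis by (rule ret_pair_neq)
    qed
    have "strongly_antimonotonic g h"
      unfolding strongly_antimonotonic_def
    proof (intro allI)
      fix x x'
      show "(g x - g x') * (h x - h x') \<le> 0"
      proof (rule ccontr)
        assume "\<not> ?thesis"
        then have "(g x - g x') * (h x - h x') > 0" by simp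
        then have "x = x'" by (intro key) simp
        with \<open>(g x - g x') * (h x - h x') > 0\<close> show False by simp
      qed
    qed
    moreover have "inj g"
    proof (rule injI)
      fix x x' assume "g x = g x'"
      then show "x = x'" by (intro key) simp
    qed
    moreover have "inj h"
    proof (rule injI)
      fix x x' assume "h x = h x'"
      then show "x = x'" by (intro key) simp
    qed
    ultimately show "strongly_antimonotonic g h \<and> inj g \<and> inj h" by blast
  next
    assume "strongly_antimonotonic g h \<and> inj g \<and> inj h"
    then have "R_gh g h \<subseteq> R_a" using part2_back[OF assms] by blast
    moreover have "R_a \<subseteq> R_gh g h"
    proof
      fix M assume "M \<in> R_a"
      then obtain x where "M = return borel x \<Otimes>\<^sub>M return borel x" unfolding R_a_def by blast
      then show "M \<in> R_gh g h" using in_Rgh_pt[OF assms, of x x] by simp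
    qed
    ultimately show "R_gh g h = R_a" by blast
  qed
  from A B show ?thesis by (rule conjI)
qed

end
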